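(* If $T\in\mathcal{T}_3$ has $n\ge 30$ vertices then there is some internal vertex $v$ of $T$ with $|\mu(T)-\lambda(T,v)|<2$.
   Context: A leaf is a vertex of degree at most 1; an internal vertex has degree at least 2. $\mathcal{T}_3$ is the set of finite trees with at least one internal vertex in which every internal vertex has degree at least 3. A subtree is a nonempty vertex set inducing a connected subgraph. $\mu(T)$ is the average number of vertices over all subtrees of $T$, and $\lambda(T,v)$ is the average number of vertices over all subtrees of $T$ containing $v$. *)

theory Defs
  imports Complex_Main
begin

definition simple_graph :: "'a set \<Rightarrow> 'a set set \<Rightarrow> bool" where
  "simple_graph V E \<longleftrightarrow> finite V \<and>
     (\<forall>e\<in>E. \<exists>x y. e = {x, y} \<and> x \<noteq> y \<and> x \<in> V \<and> y \<in> V)"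

definition degree :: "'a set set \<Rightarrow> 'a \<Rightarrow> nat" where
  "degree E v = card {e\<in>E. v \<in> e}"

definition adj_in :: "'a set set \<Rightarrow> 'a set \<Rightarrow> ('a \<times> 'a) set" where
  "adj_in E S = {(x, y). {x, y} \<in> E \<and> x \<in> S \<and> y \<in> S}"

definition connected_in :: "'a set set \<Rightarrow> 'a set \<Rightarrow> bool" where
  "connected_in E S \<longleftrightarrow> S \<noteq> {} \<and> (\<forall>x\<in>S. \<forall>y\<in>S. (x, y) \<in> (adj_in E S)\<^sup>*)"

definition is_cycle :: "'a set set \<Rightarrow> 'a list \<Rightarrow> bool" where
  "is_cycle E cs \<longleftrightarrow> length cs \<ge> 3 \<and> distinct cs \<and>
     (\<forall>i. Suc i < length cs \<longrightarrow> {cs ! i, cs ! Suc i} \<in> E) \<and>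
     {last cs, hd cs} \<in> E"

definition is_tree :: "'a set \<Rightarrow> 'a set set \<Rightarrow> bool" where
  "is_tree V E \<longleftrightarrow> simple_graph V E \<and> connected_in E V \<and> \<not> (\<exists>cs. is_cycle E cs)"

definition internal :: "'a set set \<Rightarrow> 'a \<Rightarrow> bool" where
  "internal E v \<longleftrightarrow> degree E v \<ge> 2"

definition in_T3 :: "'a set \<Rightarrow> 'a set set \<Rightarrow> bool" where
  "in_T3 V E \<longleftrightarrow> is_tree V E \<and> (\<exists>v\<in>V. internal E v) \<and>
     (\<forall>v\<in>V. internal E v \<longrightarrow> degree E v \<ge> 3)"

definition subtrees :: "'a set \<Rightarrow> 'a set set \<Rightarrow> 'a set set" where
  "subtrees V E = {S. S \<subseteq> V \<and> connected_in E S}"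

definition mu :: "'a set \<Rightarrow> 'a set set \<Rightarrow> real" where
  "mu V E = (\<Sum>S\<in>subtrees V E. real (card S)) / real (card (subtrees V E))"

definition lambda_loc :: "'a set \<Rightarrow> 'a set set \<Rightarrow> 'a \<Rightarrow> real" where
  "lambda_loc V E v = (\<Sum>S\<in>{S\<in>subtrees V E. v \<in> S}. real (card S)) /
                      real (card {S\<in>subtrees V E. v \<in> S})"

end

theory Submission
  imports Defs "HOL-Library.Transitive_Closure_Table" "HOL-Library.FuncSet"
begin

definition nb :: "'a set set \<Rightarrow> 'a set \<Rightarrow> 'a \<Rightarrow> 'a set" where
  "nb E X w = {y\<in>X. {w,y}\<in>E}"

definition Br :: "'a set set \<Rightarrow> 'a set \<Rightarrow> 'a \<Rightarrow> 'a \<Rightarrow> 'a set" where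
  "Br E X v u = {w\<in>X-{v}. (u,w)\<in>(adj_in E (X-{v}))\<^sup>*}"

lemma adj_sym: "(x,y) \<in> adj_in E S \<Longrightarrow> (y,x) \<in> adj_in E S"
  by (auto simp: adj_in_def insert_commute)

lemma reach_sym: "(x,y) \<in> (adj_in E S)\<^sup>* \<Longrightarrow> (y,x) \<in> (adj_in E S)\<^sup>*"
proof (induction rule: rtrancl_induct)
  case base then show ?case by simp
next
  case (step y z)
  then show ?case by (meson adj_sym converse_rtrancl_into_rtrancl)
qed

lemma reach_in: "(x,y) \<in> (adj_in E S)\<^sup>* \<Longrightarrow> x = y \<or> (x \<in> S \<and> y \<in> S)"
  by (induction rule: rtrancl_induct) (auto simp: adj_in_def)

lemma adj_mono: "S \<subseteq> T \<Longrightarrow> adj_in E S \<subseteq> adj_in E T"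
  by (auto simp: adj_in_def)

lemma reach_mono: "(x,y) \<in> (adj_in E S)\<^sup>* \<Longrightarrow> S \<subseteq> T \<Longrightarrow> (x,y) \<in> (adj_in E T)\<^sup>*"
  using rtrancl_mono[OF adj_mono] by blast

lemma comp_reach:
  "(x,y) \<in> (adj_in E S)\<^sup>* \<Longrightarrow> (x,y) \<in> (adj_in E {z\<in>S. (x,z) \<in> (adj_in E S)\<^sup>*})\<^sup>*"
proof (induction rule: rtrancl_induct)
  case base then show ?case by simp
next
  case (step y z)
  have "(x,z) \<in> (adj_in E S)\<^sup>*" using step by (meson rtrancl_into_rtrancl)
  then have "(y,z) \<in> adj_in E {z\<in>S. (x,z) \<in> (adj_in E S)\<^sup>*}"
    using step by (auto simp: adj_in_def)
  then show ?case using step by (meson rtrancl_into_rtrancl)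
qed

lemma rpath_props:
  "rtrancl_path r x xs y \<Longrightarrow>
   (\<forall>i. Suc i < length (x#xs) \<longrightarrow> r ((x#xs)!i) ((x#xs)!Suc i)) \<and> last (x#xs) = y"
proof (induction rule: rtrancl_path.induct)
  case (base x) then show ?case by simp
next
  case (step x y ys z)
  show ?case
  proof (intro conjI allI impI)
    fix i assume "Suc i < length (x#y#ys)"
    then show "r ((x#y#ys)!i) ((x#y#ys)!Suc i)" using step by (cases i) auto
  next
    show "last (x#y#ys) = z" using step by simp
  qed
qed

lemma rpath_set: "rtrancl_path r x xs y \<Longrightarrow> (\<forall>a b. r a b \<longrightarrow> b \<in> Y) \<Longrightarrow> set xs \<subseteq> Y"
  by (induction rule: rtrancl_path.induct) auto


lemma sumprod_gen:
  fixes a :: "'b \<Rightarrow> nat"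
  assumes "finite W" "2*c \<le> D" "2 \<le> D" "\<forall>w\<in>W. 1 \<le> a w"
  shows "2*(c + (\<Sum>w\<in>W. a w)) \<le> D * (\<Prod>w\<in>W. 1 + a w)"
  using assms
proof (induction W rule: finite_induct)
  case empty then show ?case by simp
next
  case (insert x W)
  have P1: "1 \<le> (\<Prod>w\<in>W. 1 + a w)" by (rule prod_ge_1) simp
  then have P2: "2 \<le> D * (\<Prod>w\<in>W. 1 + a w)" using insert(5)
    by (metis mult_le_mono nat_mult_1_right order_trans)
  have IH: "2*(c + (\<Sum>w\<in>W. a w)) \<le> D * (\<Prod>w\<in>W. 1 + a w)" using insert by simp
  have "2*(c + (\<Sum>w\<in>insert x W. a w)) = 2*(c + (\<Sum>w\<in>W. a w)) + 2 * a x" using insert by simp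
  also have "\<dots> \<le> D * (\<Prod>w\<in>W. 1 + a w) + D * (\<Prod>w\<in>W. 1 + a w) * a x"
    using IH P2 by (simp add: add_mono mult_le_mono)
  also have "\<dots> = D * (\<Prod>w\<in>insert x W. 1 + a w)" using insert by (simp add: algebra_simps)
  finally show ?case .
qed

lemma sumprod:
  fixes a :: "'b \<Rightarrow> nat"
  assumes "finite U" "2 \<le> card U" "\<forall>w\<in>U. 1 \<le> a w"
  shows "2*(\<Sum>w\<in>U. a w) \<le> (\<Prod>w\<in>U. 1 + a w)"
proof -
  obtain x where x: "x \<in> U" using assms(2) by fastforce
  have "1 \<le> card (U - {x})" using assms(1,2) x by simp
  then have "U - {x} \<noteq> {}" by (metis card.empty not_one_le_zero)
  then obtain y where y: "y \<in> U - {x}" by blast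
  define W where "W = U - {x} - {y}"
  have U: "U = insert x (insert y W)" "x \<notin> insert y W" "y \<notin> W" using x y by (auto simp: W_def)
  have fW: "finite W" using assms(1) by (simp add: W_def)
  have ax: "1 \<le> a x" and ay: "1 \<le> a y" using assms(3) x y by auto
  have h: "2*(a x + a y) \<le> (1 + a x) * (1 + a y)"
  proof -
    obtain p q where "a x = p + 1" "a y = q + 1" using ax ay by (metis add.commute le_Suc_ex Suc_eq_plus1_left)
    then show ?thesis by (simp add: algebra_simps)
  qed
  moreover have h2: "2 \<le> (1 + a x) * (1 + a y)" by (rule order_trans[OF _ h]) (use ax in simp)
  have "2*((a x + a y) + (\<Sum>w\<in>W. a w)) \<le> ((1 + a x) * (1 + a y)) * (\<Prod>w\<in>W. 1 + a w)"
    by (rule sumprod_gen[OF fW h h2]) (use assms(3) U in auto)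
  then show ?thesis using U fW by (simp add: algebra_simps)
qed


lemma L_k: "3 \<le> k \<Longrightarrow> (k::nat)^4 \<le> 2 * 4^k"
proof (induction k rule: nat_induct_at_least)
  case base then show ?case by simp
next
  case (Suc k)
  have "3 * Suc k \<le> 4 * k" using Suc by simp
  then have "(3 * Suc k)^4 \<le> (4 * k)^4" by (rule power_mono) simp
  then have "3^4 * (Suc k)^4 \<le> 4^4 * k^4" by (simp only: power_mult_distrib)
  then have "81 * (Suc k)^4 \<le> 256 * k^4" by simp
  then have "(Suc k)^4 \<le> 4 * k^4" by linarith
  also have "\<dots> \<le> 4 * (2 * 4^k)" using Suc by simp
  finally show ?case by simp
qed

lemma L_n: "29 \<le> j \<Longrightarrow> 2 * (j::nat)^4 < 2^(j - 3)"
proof (induction j rule: nat_induct_at_least)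
  case base then show ?case by simp
next
  case (Suc j)
  have "10 * Suc j \<le> 11 * j" using Suc by simp
  then have "(10 * Suc j)^4 \<le> (11 * j)^4" by (rule power_mono) simp
  then have "10^4 * (Suc j)^4 \<le> 11^4 * j^4" by (simp only: power_mult_distrib)
  then have "10000 * (Suc j)^4 \<le> 14641 * j^4" by simp
  then have "2 * (Suc j)^4 \<le> 2 * (2 * j^4)" by linarith
  also have "\<dots> < 2 * 2^(j-3)" using Suc by simp
  also have "\<dots> = 2^(Suc j - 3)"
  proof -
    have "Suc j - 3 = Suc (j - 3)" using Suc by arith
    then show ?thesis by simp
  qed
  finally show ?case .
qed

lemma L_main:
  assumes "30 \<le> n" "3 \<le> k"
  shows "((k::nat)*(n-1))^4 < 2^(n + 2*k - 4)"
proof -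
  have "((k::nat)*(n-1))^4 = k^4 * (n-1)^4" by (simp add: power_mult_distrib)
  also have "\<dots> \<le> (2 * 4^k) * (n-1)^4" using L_k[OF assms(2)] by simp
  also have "\<dots> = 4^k * (2 * (n-1)^4)" by simp
  also have "\<dots> < 4^k * 2^(n - 1 - 3)" using L_n[of "n-1"] assms(1) by simp
  also have "\<dots> = 2^(n + 2*k - 4)"
  proof -
    have "(4::nat)^k = 2^(2*k)" by (simp add: power_mult)
    moreover have "n + 2*k - 4 = 2*k + (n - 1 - 3)" using assms by simp
    ultimately show ?thesis by (simp add: power_add)
  qed
  finally show ?thesis .
qed

lemma real_fin:
  fixes N1 N2 R1 R2 n :: real
  assumes "1 \<le> N1" "0 \<le> N2" "N1 \<le> R1" "R1 \<le> n*N1" "N2 \<le> R2" "R2 \<le> n*N2" "(n-1)*N2 < 2*N1"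
  shows "\<bar>(R1+R2)/(N1+N2) - R1/N1\<bar> < 2"
proof -
  have p1: "0 < N1" "0 < N1 + N2" using assms by auto
  have d: "(R1+R2)/(N1+N2) - R1/N1 = (R2*N1 - R1*N2)/((N1+N2)*N1)"
    using p1 by (simp add: field_simps)
  have a1: "R2*N1 \<le> (n*N2)*N1" using assms p1 by (intro mult_right_mono) auto
  have a2: "N1*N2 \<le> R1*N2" using assms by (intro mult_right_mono) auto
  have a3: "N2*N1 \<le> R2*N1" using assms p1 by (intro mult_right_mono) auto
  have a4: "R1*N2 \<le> (n*N1)*N2" using assms by (intro mult_right_mono) auto
  have "\<bar>R2*N1 - R1*N2\<bar> \<le> ((n-1)*N2)*N1" using a1 a2 a3 a4 by (simp add: algebra_simps abs_le_iff)
  also have "\<dots> < (2*N1)*N1" using assms p1 by (intro mult_strict_right_mono) auto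
  also have "\<dots> \<le> 2*((N1+N2)*N1)" using assms p1 by (simp add: algebra_simps)
  finally have "\<bar>R2*N1 - R1*N2\<bar> < 2*((N1+N2)*N1)" .
  moreover have "0 < (N1+N2)*N1" using p1 by simp
  ultimately show ?thesis unfolding d by (simp add: abs_divide divide_less_eq)
qed

locale tr =
  fixes V :: "'a set" and E :: "'a set set"
  assumes tree: "is_tree V E"
begin

lemma finV: "finite V"
  using tree by (simp add: is_tree_def simple_graph_def)

lemma connV: "connected_in E V"
  using tree by (simp add: is_tree_def)

lemma edge: assumes "{a,b} \<in> E" shows "a \<noteq> b \<and> a \<in> V \<and> b \<in> V"
proof -
  obtain x y where "{a,b} = {x,y}" "x \<noteq> y" "x \<in> V" "y \<in> V"
    using tree assms unfolding is_tree_def simple_graph_def by blast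
  then show ?thesis by (auto simp: doubleton_eq_iff)
qed

lemma no_two_paths:
  assumes e1: "{v,u} \<in> E" and e2: "{v,u'} \<in> E" and ne: "u \<noteq> u'"
    and p: "(u,u') \<in> (adj_in E Y)\<^sup>*" and vY: "v \<notin> Y"
  shows False
proof -
  let ?r = "\<lambda>a b. (a,b) \<in> adj_in E Y"
  have "?r\<^sup>*\<^sup>* u u'" using p by (simp add: rtranclp_rtrancl_eq)
  then obtain xs where "rtrancl_path ?r u xs u'" using rtranclp_eq_rtrancl_path by metis
  then obtain xs' where P: "rtrancl_path ?r u xs' u'" and D: "distinct (u # xs')"
    by (rule rtrancl_path_distinct)
  have ne': "xs' \<noteq> []" using P ne by (auto elim: rtrancl_path.cases)
  have sY: "set xs' \<subseteq> Y" using rpath_set[OF P, of Y] by (auto simp: adj_in_def)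
  obtain a as where xa: "xs' = a # as" using ne' by (cases xs') auto
  have "?r u a" using P xa by (auto elim: rtrancl_path.cases)
  then have uY: "u \<in> Y" by (auto simp: adj_in_def)
  have props: "(\<forall>i. Suc i < length (u#xs') \<longrightarrow> ?r ((u#xs')!i) ((u#xs')!Suc i)) \<and> last (u#xs') = u'"
    using rpath_props[OF P] .
  have "is_cycle E (v # u # xs')"
    unfolding is_cycle_def
  proof (intro conjI allI impI)
    show "3 \<le> length (v # u # xs')" using xa by simp
    show "distinct (v # u # xs')" using D sY uY vY by auto
    fix i assume i: "Suc i < length (v # u # xs')"
    show "{(v # u # xs') ! i, (v # u # xs') ! Suc i} \<in> E"
    proof (cases i)
      case 0 then show ?thesis using e1 by simp
    next
      case (Suc j)
      then have "?r ((u#xs')!j) ((u#xs')!Suc j)" using props i by auto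
      then show ?thesis using Suc by (auto simp: adj_in_def)
    qed
  next
    show "{last (v # u # xs'), hd (v # u # xs')} \<in> E"
      using props e2 by (simp add: insert_commute)
  qed
  then show False using tree by (auto simp: is_tree_def)
qed

lemma B1: "v \<in> X \<Longrightarrow> u \<in> nb E X v \<Longrightarrow> u \<in> Br E X v u"
  using edge by (auto simp: nb_def Br_def)

lemma B2: "Br E X v u \<subseteq> X - {v}"
  by (auto simp: Br_def)

lemma B3:
  assumes "u \<in> nb E X v" "u' \<in> nb E X v" "w \<in> Br E X v u" "w \<in> Br E X v u'"
  shows "u = u'"
proof (rule ccontr)
  assume ne: "u \<noteq> u'"
  have "(u,w) \<in> (adj_in E (X-{v}))\<^sup>*" "(u',w) \<in> (adj_in E (X-{v}))\<^sup>*"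
    using assms by (auto simp: Br_def)
  then have "(u,u') \<in> (adj_in E (X-{v}))\<^sup>*" using reach_sym rtrancl_trans by metis
  then show False using no_two_paths[of v u u' "X-{v}"] assms ne by (auto simp: nb_def)
qed

lemma B4:
  assumes "S \<subseteq> X" "v \<in> X" "(x,v) \<in> (adj_in E S)\<^sup>*"
  shows "x = v \<or> (\<exists>u\<in>nb E X v. x \<in> Br E X v u \<and> (x,u) \<in> (adj_in E (S \<inter> Br E X v u))\<^sup>*)"
  using assms(3)
proof (induction rule: converse_rtrancl_induct)
  case base then show ?case by simp
next
  case (step x y)
  show ?case
  proof (cases "x = v")
    case True then show ?thesis by simp
  next
    case xv: False
    have xy: "x \<in> S" "y \<in> S" "{x,y} \<in> E" using step(1) by (auto simp: adj_in_def)
    show ?thesis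
    proof (cases "y = v")
      case True
      then have "x \<in> nb E X v" using xy assms by (auto simp: nb_def insert_commute)
      then show ?thesis using B1[OF assms(2)] by blast
    next
      case yv: False
      then obtain u where u: "u \<in> nb E X v" "y \<in> Br E X v u"
        "(y,u) \<in> (adj_in E (S \<inter> Br E X v u))\<^sup>*" using step by blast
      have "(y,x) \<in> adj_in E (X-{v})" using xy xv yv assms(1) by (auto simp: adj_in_def insert_commute)
      moreover have "(u,y) \<in> (adj_in E (X-{v}))\<^sup>*" using u(2) by (simp add: Br_def)
      ultimately have "(u,x) \<in> (adj_in E (X-{v}))\<^sup>*" by (meson rtrancl_into_rtrancl)
      then have xB: "x \<in> Br E X v u" using xv xy assms(1) by (auto simp: Br_def)
      have "(x,y) \<in> adj_in E (S \<inter> Br E X v u)" using xB u(2) xy by (auto simp: adj_in_def)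
      then have "(x,u) \<in> (adj_in E (S \<inter> Br E X v u))\<^sup>*" using u(3) by (meson converse_rtrancl_into_rtrancl)
      then show ?thesis using u(1) xB by blast
    qed
  qed
qed

lemma B5:
  assumes "connected_in E X" "v \<in> X" "w \<in> X" "w \<noteq> v"
  shows "\<exists>u\<in>nb E X v. w \<in> Br E X v u"
proof -
  have "(w,v) \<in> (adj_in E X)\<^sup>*" using assms by (simp add: connected_in_def)
  then show ?thesis using B4[of X X v w] assms by blast
qed

lemma B6:
  assumes "v \<in> X" "u \<in> nb E X v"
  shows "connected_in E (Br E X v u)"
proof -
  have eq: "{z\<in>X-{v}. (u,z) \<in> (adj_in E (X-{v}))\<^sup>*} = Br E X v u" by (simp add: Br_def)
  have r: "(u,x) \<in> (adj_in E (Br E X v u))\<^sup>*" if "x \<in> Br E X v u" for x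
  proof -
    have "(u,x) \<in> (adj_in E (X-{v}))\<^sup>*" using that by (simp add: Br_def)
    from comp_reach[OF this] show ?thesis unfolding eq .
  qed
  show ?thesis unfolding connected_in_def
  proof (intro conjI ballI)
    show "Br E X v u \<noteq> {}" using B1[OF assms] by blast
    fix x y assume xy: "x \<in> Br E X v u" "y \<in> Br E X v u"
    have "(x,u) \<in> (adj_in E (Br E X v u))\<^sup>*" by (rule reach_sym[OF r[OF xy(1)]])
    moreover have "(u,y) \<in> (adj_in E (Br E X v u))\<^sup>*" by (rule r[OF xy(2)])
    ultimately show "(x,y) \<in> (adj_in E (Br E X v u))\<^sup>*" by (rule rtrancl_trans)
  qed
qed

lemma B7a:
  assumes "w \<in> Br E X v u" "y \<in> nb E X w" "y \<noteq> v"
  shows "y \<in> Br E X v u"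
proof -
  have "(w,y) \<in> adj_in E (X-{v})" using assms by (auto simp: adj_in_def nb_def Br_def)
  moreover have "(u,w) \<in> (adj_in E (X-{v}))\<^sup>*" using assms(1) by (simp add: Br_def)
  ultimately have "(u,y) \<in> (adj_in E (X-{v}))\<^sup>*" by (meson rtrancl_into_rtrancl)
  then show ?thesis using assms by (auto simp: Br_def nb_def)
qed

lemma B7b:
  assumes "v \<in> X" "u \<in> nb E X v" "w \<in> Br E X v u" "w \<noteq> u"
  shows "v \<notin> nb E X w"
proof
  assume "v \<in> nb E X w"
  then have "w \<in> nb E X v" using assms B2 by (auto simp: nb_def insert_commute)
  then have "w = u" using B3[of w X v u w] B1[OF assms(1)] assms by blast
  then show False using assms by simp
qed

lemma nb_Br:
  assumes "v \<in> X" "u \<in> nb E X v" "w \<in> Br E X v u"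
  shows "nb E (Br E X v u) w = nb E X w - {v}"
  using B7a[OF assms(3)] B2[of X v u] by (auto simp: nb_def)

lemma nb_Br2:
  assumes "v \<in> X" "u \<in> nb E X v" "w \<in> Br E X v u" "w \<noteq> u"
  shows "nb E (Br E X v u) w = nb E X w"
  using nb_Br[OF assms(1-3)] B7b[OF assms] by auto


lemma X1:
  assumes e: "{v,u} \<in> E"
  shows "Br E V u v \<inter> Br E V v u = {}"
proof (rule ccontr)
  assume "Br E V u v \<inter> Br E V v u \<noteq> {}"
  then obtain w where w1: "w \<in> Br E V u v" and w2: "w \<in> Br E V v u" by blast
  have vV: "v \<in> V" and uV: "u \<in> V" using edge[OF e] by auto
  have wu: "w \<noteq> u" and wv: "w \<noteq> v" using w1 w2 by (auto simp: Br_def)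
  have "(v,w) \<in> (adj_in E (V-{u}))\<^sup>*" using w1 by (simp add: Br_def)
  then have p: "(w,v) \<in> (adj_in E (V-{u}))\<^sup>*" by (rule reach_sym)
  from B4[of "V-{u}" V v w, OF _ vV p] wv obtain u' where
    u': "u' \<in> nb E V v" "w \<in> Br E V v u'" "(w,u') \<in> (adj_in E ((V-{u}) \<inter> Br E V v u'))\<^sup>*"
    by blast
  from reach_in[OF u'(3)] wu have "u' \<noteq> u" by auto
  moreover have "u \<in> nb E V v" using e uV by (simp add: nb_def)
  ultimately show False using B3[of u V v u' w] u' w2 by blast
qed

lemma X2:
  assumes e: "{v,u} \<in> E" and x: "x \<in> V" "x \<notin> Br E V v u"
  shows "x \<in> Br E V u v"
proof -
  have vV: "v \<in> V" and uV: "u \<in> V" and uv: "u \<noteq> v" using edge[OF e] by auto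
  have unb: "u \<in> nb E V v" using e uV by (simp add: nb_def)
  have vnb: "v \<in> nb E V u" using e vV by (simp add: nb_def insert_commute)
  have xu: "x \<noteq> u" using x B1[OF vV unb] by auto
  show ?thesis
  proof (cases "x = v")
    case True then show ?thesis using B1[OF uV vnb] by simp
  next
    case False
    then obtain u' where u': "u' \<in> nb E V v" "x \<in> Br E V v u'" using B5[OF connV vV x(1)] by blast
    have u'u: "u' \<noteq> u" using u' x by auto
    have uni: "u \<notin> Br E V v u'" using B3[of u V v u' u] B1[OF vV unb] u'(1) unb u'u by blast
    have eq: "{z\<in>V-{v}. (u',z) \<in> (adj_in E (V-{v}))\<^sup>*} = Br E V v u'" by (simp add: Br_def)
    have "(u',x) \<in> (adj_in E (V-{v}))\<^sup>*" using u'(2) by (simp add: Br_def)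
    from comp_reach[OF this] have "(u',x) \<in> (adj_in E (Br E V v u'))\<^sup>*" unfolding eq .
    moreover have "Br E V v u' \<subseteq> V - {u}" using uni B2[of V v u'] by blast
    ultimately have p: "(u',x) \<in> (adj_in E (V-{u}))\<^sup>*" by (rule reach_mono)
    have "(v,u') \<in> adj_in E (V-{u})" using u' u'u uv vV by (auto simp: nb_def adj_in_def)
    then have "(v,x) \<in> (adj_in E (V-{u}))\<^sup>*" using p by (meson converse_rtrancl_into_rtrancl)
    then show ?thesis using x xu by (simp add: Br_def)
  qed
qed

lemma finite_Br: "finite X \<Longrightarrow> finite (Br E X v u)"
  using B2 finite_subset by (metis finite_Diff)

lemma finite_nb: "finite X \<Longrightarrow> finite (nb E X v)"
  by (simp add: nb_def)

lemma centroid: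
  assumes ne: "V \<noteq> {}"
  shows "\<exists>v\<in>V. \<forall>u\<in>nb E V v. 2 * card (Br E V v u) \<le> card V"
proof -
  define g where "g v = Max (insert 0 ((\<lambda>u. card (Br E V v u)) ` nb E V v))" for v
  have fg: "finite (g ` V)" using finV by simp
  have "Min (g ` V) \<in> g ` V" using fg ne by simp
  then obtain v where vV: "v \<in> V" and vmin: "g v = Min (g ` V)" by auto
  have minv: "g v \<le> g w" if "w \<in> V" for w using vmin fg that by simp
  show ?thesis
  proof (rule bexI[OF _ vV], rule ballI, rule ccontr)
    fix u assume unb: "u \<in> nb E V v" and big: "\<not> 2 * card (Br E V v u) \<le> card V"
    define c where "c = card (Br E V v u)"
    have e: "{v,u} \<in> E" and uV: "u \<in> V" using unb by (auto simp: nb_def)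
    have vnb: "v \<in> nb E V u" using e vV by (simp add: nb_def insert_commute)
    have cg: "c \<le> g v" unfolding g_def c_def
      by (rule Max_ge) (auto simp: finite_nb[OF finV] unb)
    have BV: "Br E V v u \<subseteq> V" using B2[of V v u] by blast
    have uB: "u \<in> Br E V v u" using B1[OF vV unb] .
    have lt: "card (Br E V u w) < c" if w: "w \<in> nb E V u" for w
    proof (cases "w = v")
      case True
      have "Br E V u v \<subseteq> V - Br E V v u" using X1[OF e] B2[of V u v] by blast
      then have "card (Br E V u v) \<le> card (V - Br E V v u)" using finV by (simp add: card_mono)
      also have "\<dots> = card V - c" unfolding c_def using card_Diff_subset[OF finite_subset[OF BV finV] BV] .
      finally show ?thesis using True big c_def by simp
    next
      case False
      have "Br E V u w \<subseteq> Br E V v u - {u}"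
      proof
        fix x assume xw: "x \<in> Br E V u w"
        have "x \<notin> Br E V u v" using B3[of w V u v x] w vnb xw False by blast
        moreover have "x \<in> V" "x \<noteq> u" using xw B2[of V u w] by auto
        moreover have "{u,v} \<in> E" using e by (simp add: insert_commute)
        ultimately show "x \<in> Br E V v u - {u}" using X2[of u v x] by blast
      qed
      then have "card (Br E V u w) \<le> card (Br E V v u - {u})"
        using finite_Br[OF finV] by (simp add: card_mono)
      also have "\<dots> < c" unfolding c_def using uB finite_Br[OF finV, of v u]
        by (metis card_Diff1_less)
      finally show ?thesis .
    qed
    have cpos: "0 < c" using uB finite_Br[OF finV, of v u] c_def card_gt_0_iff by blast
    have "g u < c" unfolding g_def
      using lt cpos by (simp add: finite_nb[OF finV])
    then show False using cg minv[OF uV] by linarith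
  qed
qed


lemma finite_subtrees: "finite X \<Longrightarrow> finite (subtrees X E)"
  by (rule finite_subset[of _ "Pow X"]) (auto simp: subtrees_def)

lemma D1:
  assumes cX: "connected_in E X" and r: "r \<in> X"
  shows "{S\<in>subtrees X E. r\<notin>S} \<subseteq> (\<Union>u\<in>nb E X r. subtrees (Br E X r u) E)"
proof
  fix S assume "S \<in> {S\<in>subtrees X E. r\<notin>S}"
  then have SX: "S \<subseteq> X" and cS: "connected_in E S" and rS: "r \<notin> S" by (auto simp: subtrees_def)
  obtain x where xS: "x \<in> S" using cS by (auto simp: connected_in_def)
  have xr: "x \<noteq> r" using xS rS by auto
  obtain u where u: "u \<in> nb E X r" "x \<in> Br E X r u" using B5[OF cX r _ xr] xS SX by blast
  have "S \<subseteq> Br E X r u"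
  proof
    fix y assume yS: "y \<in> S"
    have "(x,y) \<in> (adj_in E S)\<^sup>*" using cS xS yS by (simp add: connected_in_def)
    moreover have "S \<subseteq> X - {r}" using SX rS by blast
    ultimately have "(x,y) \<in> (adj_in E (X-{r}))\<^sup>*" by (rule reach_mono)
    moreover have "(u,x) \<in> (adj_in E (X-{r}))\<^sup>*" using u(2) by (simp add: Br_def)
    ultimately have "(u,y) \<in> (adj_in E (X-{r}))\<^sup>*" by (meson rtrancl_trans)
    then show "y \<in> Br E X r u" using yS SX rS by (auto simp: Br_def)
  qed
  then show "S \<in> (\<Union>u\<in>nb E X r. subtrees (Br E X r u) E)" using u(1) cS by (auto simp: subtrees_def)
qed

lemma D1c:
  assumes cX: "connected_in E X" and r: "r \<in> X" and fX: "finite X"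
  shows "card {S\<in>subtrees X E. r\<notin>S} \<le> (\<Sum>u\<in>nb E X r. card (subtrees (Br E X r u) E))"
proof -
  have "card {S\<in>subtrees X E. r\<notin>S} \<le> card (\<Union>u\<in>nb E X r. subtrees (Br E X r u) E)"
    by (rule card_mono) (auto intro!: finite_subtrees finite_Br fX finite_nb simp: D1[OF cX r])
  also have "\<dots> \<le> (\<Sum>u\<in>nb E X r. card (subtrees (Br E X r u) E))"
    by (rule card_UN_le) (simp add: finite_nb fX)
  finally show ?thesis .
qed

lemma D0:
  assumes fX: "finite X"
  shows "card (subtrees X E) \<le> card {S\<in>subtrees X E. r\<in>S} + card {S\<in>subtrees X E. r\<notin>S}"
proof -
  have "subtrees X E = {S\<in>subtrees X E. r\<in>S} \<union> {S\<in>subtrees X E. r\<notin>S}" by blast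
  then have "card (subtrees X E) = card ({S\<in>subtrees X E. r\<in>S} \<union> {S\<in>subtrees X E. r\<notin>S})" by simp
  also have "\<dots> \<le> card {S\<in>subtrees X E. r\<in>S} + card {S\<in>subtrees X E. r\<notin>S}" by (rule card_Un_le)
  finally show ?thesis .
qed

lemma Dcard:
  assumes cX: "connected_in E X" and r: "r \<in> X" and fX: "finite X"
  shows "card X \<le> 1 + (\<Sum>u\<in>nb E X r. card (Br E X r u))"
proof -
  have "X \<subseteq> insert r (\<Union>u\<in>nb E X r. Br E X r u)" using B5[OF cX r] by blast
  then have "card X \<le> card (insert r (\<Union>u\<in>nb E X r. Br E X r u))"
    by (rule card_mono[rotated]) (auto intro!: finite_Br fX finite_nb)
  also have "\<dots> \<le> 1 + card (\<Union>u\<in>nb E X r. Br E X r u)" by (simp add: card_insert_le_m1 card_insert_if)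
  also have "\<dots> \<le> 1 + (\<Sum>u\<in>nb E X r. card (Br E X r u))"
    using card_UN_le[of "nb E X r" "Br E X r"] by (simp add: finite_nb fX)
  finally show ?thesis .
qed

lemma D2:
  assumes cX: "connected_in E X" and r: "r \<in> X" and fX: "finite X"
  shows "(\<Prod>u\<in>nb E X r. 1 + card {T\<in>subtrees (Br E X r u) E. u\<in>T}) \<le> card {S\<in>subtrees X E. r\<in>S}"
proof -
  define U where "U = nb E X r"
  define Bs where "Bs u = insert {} {T\<in>subtrees (Br E X r u) E. u\<in>T}" for u
  define g where "g f = insert r (\<Union>u\<in>U. f u)" for f :: "'a \<Rightarrow> 'a set"
  have fU: "finite U" using fX by (simp add: U_def finite_nb)
  have cardBs: "card (Bs u) = 1 + card {T\<in>subtrees (Br E X r u) E. u\<in>T}" for u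
  proof -
    have "{} \<notin> {T\<in>subtrees (Br E X r u) E. u\<in>T}" by auto
    moreover have "finite {T\<in>subtrees (Br E X r u) E. u\<in>T}"
      using finite_subtrees[OF finite_Br[OF fX]] by simp
    ultimately show ?thesis by (simp add: Bs_def)
  qed
  have sub: "f u \<subseteq> Br E X r u" if "f \<in> PiE U Bs" "u \<in> U" for f u
    using that by (auto simp: Bs_def subtrees_def PiE_def Pi_def)
  have restr: "g f \<inter> Br E X r u = f u" if f: "f \<in> PiE U Bs" and u: "u \<in> U" for f u
  proof
    show "f u \<subseteq> g f \<inter> Br E X r u" using sub[OF f u] u by (auto simp: g_def)
    show "g f \<inter> Br E X r u \<subseteq> f u"
    proof
      fix x assume x: "x \<in> g f \<inter> Br E X r u"
      then have "x \<noteq> r" using B2[of X r u] by blast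
      then obtain u' where u': "u' \<in> U" "x \<in> f u'" using x by (auto simp: g_def)
      then have "x \<in> Br E X r u'" using sub[OF f] by blast
      then have "u' = u" using B3[of u' X r u x] u' u x by (auto simp: U_def)
      then show "x \<in> f u" using u' by simp
    qed
  qed
  have inj: "inj_on g (PiE U Bs)"
  proof (rule inj_onI)
    fix f f' assume f: "f \<in> PiE U Bs" and f': "f' \<in> PiE U Bs" and eq: "g f = g f'"
    show "f = f'"
    proof (rule PiE_ext[OF f f'])
      fix u assume "u \<in> U"
      then show "f u = f' u" using restr[OF f] restr[OF f'] eq by metis
    qed
  qed
  have img: "g ` PiE U Bs \<subseteq> {S\<in>subtrees X E. r\<in>S}"
  proof
    fix S assume "S \<in> g ` PiE U Bs"
    then obtain f where f: "f \<in> PiE U Bs" and S: "S = g f" by blast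
    have SX: "S \<subseteq> X" using sub[OF f] B2[of X r] r S by (auto simp: g_def)
    have rS: "r \<in> S" using S by (simp add: g_def)
    have toR: "(x,r) \<in> (adj_in E S)\<^sup>*" if x: "x \<in> S" for x
    proof (cases "x = r")
      case True then show ?thesis by simp
    next
      case False
      then obtain u where u: "u \<in> U" "x \<in> f u" using x S by (auto simp: g_def)
      then have fu: "f u \<in> subtrees (Br E X r u) E" "u \<in> f u" using f by (auto simp: Bs_def PiE_def Pi_def)
      then have "(x,u) \<in> (adj_in E (f u))\<^sup>*" using u by (simp add: subtrees_def connected_in_def)
      moreover have "f u \<subseteq> S" using u S by (auto simp: g_def)
      ultimately have p: "(x,u) \<in> (adj_in E S)\<^sup>*" by (rule reach_mono)
      have "(u,r) \<in> adj_in E S" using u fu rS S by (auto simp: U_def nb_def adj_in_def insert_commute g_def)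
      then show ?thesis using p by (meson rtrancl_into_rtrancl)
    qed
    have "connected_in E S" unfolding connected_in_def
    proof (intro conjI ballI)
      show "S \<noteq> {}" using rS by blast
      fix x y assume xy: "x \<in> S" "y \<in> S"
      have "(x,r) \<in> (adj_in E S)\<^sup>*" by (rule toR[OF xy(1)])
      moreover have "(r,y) \<in> (adj_in E S)\<^sup>*" by (rule reach_sym[OF toR[OF xy(2)]])
      ultimately show "(x,y) \<in> (adj_in E S)\<^sup>*" by (rule rtrancl_trans)
    qed
    then show "S \<in> {S\<in>subtrees X E. r\<in>S}" using SX rS by (simp add: subtrees_def)
  qed
  have "card (PiE U Bs) \<le> card {S\<in>subtrees X E. r\<in>S}"
    by (rule card_inj_on_le[OF inj img]) (simp add: finite_subtrees fX)
  moreover have "card (PiE U Bs) = (\<Prod>u\<in>U. card (Bs u))" by (rule card_PiE[OF fU])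
  ultimately show ?thesis by (simp add: cardBs U_def)
qed


lemma comp_hyp:
  assumes XV: "X \<subseteq> V" and r: "r \<in> X" and u: "u \<in> nb E X r"
    and H: "\<forall>w\<in>X-{r}. card (nb E X w) \<noteq> 2"
  shows "card (nb E (Br E X r u) u) \<noteq> 1 \<and> (\<forall>w\<in>Br E X r u - {u}. card (nb E (Br E X r u) w) \<noteq> 2)"
proof
  have fX: "finite X" using XV finV finite_subset by blast
  have uB: "u \<in> Br E X r u" by (rule B1[OF r u])
  have uX: "u \<in> X - {r}" using uB B2[of X r u] by blast
  have "r \<in> nb E X u" using u r by (simp add: nb_def insert_commute)
  then have "card (nb E X u - {r}) = card (nb E X u) - 1" "1 \<le> card (nb E X u)"
    using finite_nb[OF fX] by (auto simp: card_gt_0_iff Suc_le_eq)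
  moreover have "card (nb E X u) \<noteq> 2" using H uX by blast
  ultimately show "card (nb E (Br E X r u) u) \<noteq> 1" using nb_Br[OF r u uB] by simp
  show "\<forall>w\<in>Br E X r u - {u}. card (nb E (Br E X r u) w) \<noteq> 2"
    using nb_Br2[OF r u] H B2[of X r u] by auto
qed

lemma rooted:
  assumes "X \<subseteq> V" "connected_in E X" "r \<in> X" "card (nb E X r) \<noteq> 1"
    "\<forall>w\<in>X-{r}. card (nb E X w) \<noteq> 2"
  shows "card (subtrees X E) \<le> 2 * card {S\<in>subtrees X E. r\<in>S} \<and>
         2^(card X + 1) \<le> (1 + card {S\<in>subtrees X E. r\<in>S})^2"
  using assms
proof (induction "card X" arbitrary: X r rule: less_induct)
  case less
  have XV: "X \<subseteq> V" and cX: "connected_in E X" and r: "r \<in> X" and H1: "card (nb E X r) \<noteq> 1"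
    and H2: "\<forall>w\<in>X-{r}. card (nb E X w) \<noteq> 2" using less.prems by auto
  have fX: "finite X" using XV finV finite_subset by blast
  define U where "U = nb E X r"
  define A where "A = card {S\<in>subtrees X E. r\<in>S}"
  define a where "a u = card {T\<in>subtrees (Br E X r u) E. u\<in>T}" for u
  define b where "b u = card (subtrees (Br E X r u) E)" for u
  define m where "m u = card (Br E X r u)" for u
  have fU: "finite U" by (simp add: U_def finite_nb fX)
  have IH: "b u \<le> 2 * a u \<and> 2^(m u + 1) \<le> (1 + a u)^2" if u: "u \<in> U" for u
  proof -
    have uU: "u \<in> nb E X r" using u by (simp add: U_def)
    have sub: "Br E X r u \<subseteq> X - {r}" by (rule B2)
    then have "card (Br E X r u) \<le> card (X - {r})" using fX by (simp add: card_mono)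
    also have "\<dots> < card X" using r fX by (rule card_Diff1_less[rotated])
    finally have lt: "card (Br E X r u) < card X" .
    have "Br E X r u \<subseteq> V" using sub XV by blast
    moreover have "connected_in E (Br E X r u)" by (rule B6[OF r uU])
    moreover have "u \<in> Br E X r u" by (rule B1[OF r uU])
    moreover note comp_hyp[OF XV r uU H2]
    ultimately show ?thesis using less.hyps[OF lt] unfolding a_def b_def m_def by blast
  qed
  have a1: "1 \<le> a u" if "u \<in> U" for u
  proof (rule ccontr)
    assume "\<not> 1 \<le> a u"
    then have "a u = 0" by simp
    then have "(1 + a u)^2 = 1" by simp
    moreover have "2 \<le> (2::nat)^(m u + 1)" by simp
    ultimately show False using IH[OF that] by linarith
  qed
  have D0': "card (subtrees X E) \<le> A + (\<Sum>u\<in>U. b u)"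
    using D0[OF fX, of r] D1c[OF cX r fX] unfolding A_def U_def b_def by linarith
  have D2': "(\<Prod>u\<in>U. 1 + a u) \<le> A" using D2[OF cX r fX] unfolding A_def U_def a_def .
  have Dc: "card X \<le> 1 + (\<Sum>u\<in>U. m u)" using Dcard[OF cX r fX] unfolding U_def m_def .
  show ?case
  proof (cases "card U = 0")
    case True
    then have "U = {}" using fU by simp
    then have "card (subtrees X E) \<le> A" "1 \<le> A" "card X \<le> 1" using D0' D2' Dc by auto
    then have c1: "card X + 1 \<le> 2" by simp
    have "(2::nat)^(card X + 1) \<le> 2^2" by (rule power_increasing[OF c1]) simp
    also have "(2::nat)^2 \<le> (1 + A)^2" using \<open>1 \<le> A\<close> by (intro power_mono) auto
    finally have "(2::nat)^(card X + 1) \<le> (1 + A)^2" .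
    then show ?thesis using \<open>card (subtrees X E) \<le> A\<close> unfolding A_def by simp
  next
    case False
    then have "card (nb E X r) \<noteq> 0" by (simp add: U_def)
    then have k2: "2 \<le> card U" using H1 unfolding U_def by linarith
    have "(\<Sum>u\<in>U. b u) \<le> (\<Sum>u\<in>U. 2 * a u)" using IH by (simp add: sum_mono)
    also have "\<dots> = 2 * (\<Sum>u\<in>U. a u)" by (simp add: sum_distrib_left)
    also have "\<dots> \<le> (\<Prod>u\<in>U. 1 + a u)" using sumprod[OF fU k2] a1 by blast
    finally have B: "card (subtrees X E) \<le> 2 * A" using D0' D2' by linarith
    have "(\<Sum>u\<in>U. m u + 1) = (\<Sum>u\<in>U. m u) + card U" by (simp only: sum.distrib) simp
    then have "card X + 1 \<le> (\<Sum>u\<in>U. m u + 1)" using Dc k2 by linarith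
    then have "(2::nat)^(card X + 1) \<le> 2^(\<Sum>u\<in>U. m u + 1)" by (rule power_increasing) simp
    also have "\<dots> = (\<Prod>u\<in>U. 2^(m u + 1))" by (simp add: power_sum)
    also have "\<dots> \<le> (\<Prod>u\<in>U. (1 + a u)^2)" using IH by (simp add: prod_mono)
    also have "\<dots> = (\<Prod>u\<in>U. 1 + a u)^2" by (simp add: prod_power_distrib)
    also have "\<dots> \<le> (1 + A)^2" using D2' by (simp add: power_mono)
    finally show ?thesis using B unfolding A_def by simp
  qed
qed


lemma edge_form: "e \<in> E \<Longrightarrow> \<exists>x y. e = {x,y} \<and> x \<noteq> y \<and> x \<in> V \<and> y \<in> V"
  using tree by (auto simp: is_tree_def simple_graph_def)

lemma deg: assumes vV: "v \<in> V" shows "degree E v = card (nb E V v)"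
proof -
  have "{e\<in>E. v\<in>e} = (\<lambda>y. {v,y}) ` nb E V v"
  proof
    show "{e\<in>E. v\<in>e} \<subseteq> (\<lambda>y. {v,y}) ` nb E V v"
    proof
      fix e assume e: "e \<in> {e\<in>E. v\<in>e}"
      then obtain x y where xy: "e = {x,y}" "x \<noteq> y" "x \<in> V" "y \<in> V" using edge_form by blast
      show "e \<in> (\<lambda>y. {v,y}) ` nb E V v"
      proof (cases "v = x")
        case True then show ?thesis using e xy by (auto simp: nb_def)
      next
        case False then have "v = y" using e xy by auto
        then have "e = {v,x}" using xy by (simp add: insert_commute)
        then show ?thesis using e xy by (auto simp: nb_def)
      qed
    qed
    show "(\<lambda>y. {v,y}) ` nb E V v \<subseteq> {e\<in>E. v\<in>e}" by (auto simp: nb_def)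
  qed
  moreover have "inj_on (\<lambda>y. {v,y}) (nb E V v)"
    by (rule inj_onI) (auto simp: doubleton_eq_iff)
  ultimately show ?thesis unfolding degree_def by (simp add: card_image)
qed

lemma main_ineq:
  assumes H: "\<forall>w\<in>V. card (nb E V w) \<noteq> 2" and n30: "30 \<le> card V"
  shows "\<exists>v\<in>V. 2 \<le> card (nb E V v) \<and>
    (card V - 1) * card {S\<in>subtrees V E. v\<notin>S} < 2 * card {S\<in>subtrees V E. v\<in>S}"
proof -
  define n where "n = card V"
  have "V \<noteq> {}" using n30 by auto
  then obtain v where vV: "v \<in> V" and cen: "\<forall>u\<in>nb E V v. 2 * card (Br E V v u) \<le> card V"
    using centroid by blast
  define U where "U = nb E V v"
  define k where "k = card U"
  define a where "a u = card {T\<in>subtrees (Br E V v u) E. u\<in>T}" for u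
  define b where "b u = card (subtrees (Br E V v u) E)" for u
  define m where "m u = card (Br E V v u)" for u
  define P where "P = (\<Prod>u\<in>U. 1 + a u)"
  have fU: "finite U" by (simp add: U_def finite_nb finV)
  have H2: "\<forall>w\<in>V-{v}. card (nb E V w) \<noteq> 2" using H by blast
  have IH: "b u \<le> 2 * a u \<and> 2^(m u + 1) \<le> (1 + a u)^2" if u: "u \<in> U" for u
  proof -
    have uU: "u \<in> nb E V v" using u by (simp add: U_def)
    have "Br E V v u \<subseteq> V" using B2[of V v u] by blast
    moreover have "connected_in E (Br E V v u)" by (rule B6[OF vV uU])
    moreover have "u \<in> Br E V v u" by (rule B1[OF vV uU])
    moreover note comp_hyp[OF subset_refl vV uU H2]
    ultimately show ?thesis using rooted unfolding a_def b_def m_def by blast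
  qed
  have a1: "1 \<le> a u" if "u \<in> U" for u
  proof (rule ccontr)
    assume "\<not> 1 \<le> a u"
    then have "(1 + a u)^2 = 1" by simp
    moreover have "2 \<le> (2::nat)^(m u + 1)" by simp
    ultimately show False using IH[OF that] by linarith
  qed
  have m2: "2 * m u \<le> n" if "u \<in> U" for u using cen that by (simp add: U_def m_def n_def)
  have Dc: "n \<le> 1 + (\<Sum>u\<in>U. m u)" using Dcard[OF connV vV finV] unfolding U_def m_def n_def .
  have "2 * (\<Sum>u\<in>U. m u) \<le> k * n"
  proof -
    have "2 * (\<Sum>u\<in>U. m u) = (\<Sum>u\<in>U. 2 * m u)" by (simp add: sum_distrib_left)
    also have "\<dots> \<le> (\<Sum>u\<in>U. n)" using m2 by (rule sum_mono)
    also have "\<dots> = k * n" by (simp add: k_def)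
    finally show ?thesis .
  qed
  then have "2 * n \<le> 2 + k * n" using Dc by linarith
  then have k2: "2 \<le> k"
  proof (rule contrapos_pp)
    assume "\<not> 2 \<le> k"
    then have "k * n \<le> 1 * n" by (intro mult_right_mono) auto
    then show "\<not> 2 * n \<le> 2 + k * n" using n30 n_def by linarith
  qed
  have k3: "3 \<le> k" using k2 H vV by (auto simp: k_def U_def)
  have N1: "P \<le> card {S\<in>subtrees V E. v\<in>S}" using D2[OF connV vV finV] unfolding P_def U_def a_def .
  have N2: "card {S\<in>subtrees V E. v\<notin>S} \<le> (\<Sum>u\<in>U. b u)"
    using D1c[OF connV vV finV] unfolding U_def b_def .
  have Q: "k * (n-1) < (\<Prod>u\<in>U-{i}. 1 + a u)" if i: "i \<in> U" for i
  proof -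
    define S' where "S' = (\<Sum>u\<in>U-{i}. m u)"
    have s1: "(\<Sum>u\<in>U. m u) = m i + S'" unfolding S'_def using fU i by (simp add: sum.remove)
    have s2: "(\<Sum>u\<in>U-{i}. m u + 1) = S' + (k - 1)" unfolding S'_def k_def
      using fU i by (simp only: sum.distrib) simp
    have "n + 2*k - 4 \<le> 2 * (S' + (k - 1))" using s1 Dc m2[OF i] k3 by arith
    then have "(2::nat)^(n + 2*k - 4) \<le> 2^(2 * (S' + (k - 1)))" by (rule power_increasing) simp
    also have "\<dots> = (2^(\<Sum>u\<in>U-{i}. m u + 1))^2" unfolding s2 power_mult[symmetric] by (simp add: mult.commute)
    also have "(2::nat)^(\<Sum>u\<in>U-{i}. m u + 1) = (\<Prod>u\<in>U-{i}. 2^(m u + 1))" by (simp add: power_sum)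
    also have "\<dots> \<le> (\<Prod>u\<in>U-{i}. (1 + a u)^2)" by (rule prod_mono) (use IH in auto)
    also have "\<dots> = (\<Prod>u\<in>U-{i}. 1 + a u)^2" by (simp add: prod_power_distrib)
    finally have "(2::nat)^(n + 2*k - 4) \<le> ((\<Prod>u\<in>U-{i}. 1 + a u)^2)^2" by (simp add: power_mono)
    moreover have "(k*(n-1))^4 < (2::nat)^(n + 2*k - 4)" using L_main n30 k3 n_def by simp
    ultimately have "(k*(n-1))^4 < (\<Prod>u\<in>U-{i}. 1 + a u)^4" by (simp add: power_mult[symmetric])
    then show ?thesis by (rule power_less_imp_less_base) simp
  qed
  have "k * ((n-1) * (\<Sum>u\<in>U. a u)) = (\<Sum>i\<in>U. a i * (k*(n-1)))"
  proof -
    define c where "c = k*(n-1)"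
    have "k * ((n-1) * (\<Sum>u\<in>U. a u)) = c * (\<Sum>u\<in>U. a u)" by (simp add: c_def)
    also have "\<dots> = (\<Sum>i\<in>U. c * a i)" by (rule sum_distrib_left)
    also have "\<dots> = (\<Sum>i\<in>U. a i * c)" by (simp add: mult.commute)
    finally show ?thesis by (simp add: c_def)
  qed
  also have "\<dots> < (\<Sum>i\<in>U. a i * (\<Prod>u\<in>U-{i}. 1 + a u))"
  proof (rule sum_strict_mono[OF fU])
    show "U \<noteq> {}" using k3 k_def by auto
    fix i assume i: "i \<in> U"
    show "a i * (k * (n - 1)) < a i * (\<Prod>u\<in>U-{i}. 1 + a u)"
      using Q[OF i] a1[OF i] by simp
  qed
  also have "\<dots> \<le> (\<Sum>i\<in>U. P)"
  proof (rule sum_mono)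
    fix i assume i: "i \<in> U"
    have "P = (1 + a i) * (\<Prod>u\<in>U-{i}. 1 + a u)" unfolding P_def using fU i by (simp add: prod.remove)
    then show "a i * (\<Prod>u\<in>U-{i}. 1 + a u) \<le> P" by simp
  qed
  also have "\<dots> = k * P" by (simp add: k_def)
  finally have key: "(n-1) * (\<Sum>u\<in>U. a u) < P" by simp
  have "(n-1) * card {S\<in>subtrees V E. v\<notin>S} \<le> (n-1) * (\<Sum>u\<in>U. b u)" using N2 by simp
  also have "\<dots> \<le> (n-1) * (\<Sum>u\<in>U. 2 * a u)" using IH by (simp add: sum_mono)
  also have "\<dots> = 2 * ((n-1) * (\<Sum>u\<in>U. a u))"
  proof -
    define c where "c = n - 1"
    have "(\<Sum>u\<in>U. 2 * a u) = 2 * (\<Sum>u\<in>U. a u)" by (simp add: sum_distrib_left)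
    then have "c * (\<Sum>u\<in>U. 2 * a u) = 2 * (c * (\<Sum>u\<in>U. a u))" by simp
    then show ?thesis by (simp add: c_def)
  qed
  also have "\<dots> < 2 * P" using key by simp
  also have "\<dots> \<le> 2 * card {S\<in>subtrees V E. v\<in>S}" using N1 by simp
  finally show ?thesis using vV k2 unfolding n_def k_def U_def by blast
qed


end


theorem mainTheorem11:
  fixes V :: "'a set" and E :: "'a set set"
  assumes "in_T3 V E" and "card V \<ge> 30"
  shows "\<exists>v\<in>V. internal E v \<and> \<bar>mu V E - lambda_loc V E v\<bar> < 2"
proof -
  have tree: "is_tree V E" and T3: "\<forall>v\<in>V. internal E v \<longrightarrow> 3 \<le> degree E v"
    using assms(1) by (auto simp: in_T3_def)
  interpret tr V E by unfold_locales (rule tree)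
  have H: "\<forall>w\<in>V. card (nb E V w) \<noteq> 2"
  proof
    fix w assume w: "w \<in> V"
    show "card (nb E V w) \<noteq> 2"
    proof
      assume c: "card (nb E V w) = 2"
      then have "internal E w" using deg[OF w] by (simp add: internal_def)
      then have "3 \<le> degree E w" using T3 w by blast
      then show False using deg[OF w] c by simp
    qed
  qed
  obtain v where vV: "v \<in> V" and nb2: "2 \<le> card (nb E V v)" and
    ineq: "(card V - 1) * card {S\<in>subtrees V E. v\<notin>S} < 2 * card {S\<in>subtrees V E. v\<in>S}"
    using main_ineq[OF H assms(2)] by blast
  have int: "internal E v" using deg[OF vV] nb2 by (simp add: internal_def)
  define P1 where "P1 = {S\<in>subtrees V E. v\<in>S}"
  define P2 where "P2 = {S\<in>subtrees V E. v\<notin>S}"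
  define n where "n = real (card V)"
  have fS: "finite (subtrees V E)" by (rule finite_subtrees[OF finV])
  have f1: "finite P1" and f2: "finite P2" using fS by (auto simp: P1_def P2_def)
  have Sall: "subtrees V E = P1 \<union> P2" "P1 \<inter> P2 = {}" by (auto simp: P1_def P2_def)
  have bnd: "1 \<le> real (card S) \<and> real (card S) \<le> n" if "S \<in> subtrees V E" for S
  proof -
    have SV: "S \<subseteq> V" and ne: "S \<noteq> {}" using that by (auto simp: subtrees_def connected_in_def)
    have "finite S" using SV finV finite_subset by blast
    then have "1 \<le> card S" using ne by (simp add: Suc_le_eq card_gt_0_iff)
    moreover have "card S \<le> card V" using SV finV by (rule card_mono[rotated])
    ultimately show ?thesis by (simp add: n_def)
  qed
  define N1 where "N1 = real (card P1)"
  define N2 where "N2 = real (card P2)"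
  define R1 where "R1 = (\<Sum>S\<in>P1. real (card S))"
  define R2 where "R2 = (\<Sum>S\<in>P2. real (card S))"
  have r1a: "N1 \<le> R1" unfolding N1_def R1_def
    using sum_mono[of P1 "\<lambda>_. 1::real" "\<lambda>S. real (card S)"] bnd by (auto simp: P1_def)
  have r1b: "R1 \<le> n * N1" unfolding N1_def R1_def
    using sum_mono[of P1 "\<lambda>S. real (card S)" "\<lambda>_. n"] bnd by (auto simp: P1_def mult.commute)
  have r2a: "N2 \<le> R2" unfolding N2_def R2_def
    using sum_mono[of P2 "\<lambda>_. 1::real" "\<lambda>S. real (card S)"] bnd by (auto simp: P2_def)
  have r2b: "R2 \<le> n * N2" unfolding N2_def R2_def
    using sum_mono[of P2 "\<lambda>S. real (card S)" "\<lambda>_. n"] bnd by (auto simp: P2_def mult.commute)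
  have "0 < card P1" using ineq by (simp add: P1_def)
  then have n1: "1 \<le> N1" by (simp add: N1_def)
  have n2: "0 \<le> N2" by (simp add: N2_def)
  have "real ((card V - 1) * card P2) < real (2 * card P1)" using ineq unfolding P1_def P2_def of_nat_less_iff .
  then have c: "(n - 1) * N2 < 2 * N1" using assms(2) by (simp add: n_def N1_def N2_def of_nat_diff)
  have fin: "\<bar>(R1+R2)/(N1+N2) - R1/N1\<bar> < 2" by (rule real_fin[OF n1 n2 r1a r1b r2a r2b c])
  have mu: "mu V E = (R1+R2)/(N1+N2)"
    unfolding mu_def R1_def R2_def N1_def N2_def Sall(1)
    using f1 f2 Sall(2) by (simp add: sum.union_disjoint card_Un_disjoint)
  have la: "lambda_loc V E v = R1/N1"
    unfolding lambda_loc_def R1_def N1_def P1_def ..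
  show ?thesis using vV int fin mu la by auto
qed

end
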